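(* For every pair of nonnegative integers $(p,q)$ with $p\leq q$ there exists a positive integer $n$ with $\nu(n)=p$ and $e(n)=q$. Equivalently, the map $\Phi:\mathbb{N}_{+}\to\{(a,b)\in\mathbb{N}\times\mathbb{N}:\;a\leq b\}$, $\Phi(n)=(d(n),e(n))$, is well defined and surjective.
   Context: The Stern polynomials $B_n(t)\in\mathbb{Z}[t]$ are defined by $B_0(t)=0$, $B_1(t)=1$, and for $n\geq 1$: $B_{2n}(t)=tB_n(t)$, $B_{2n+1}(t)=B_n(t)+B_{n+1}(t)$. For $n\geq 1$ let $e(n)=\deg B_n(t)$, $d(n)=\operatorname{ord}_{t=0}B_n(t)$ (the largest $k$ with $t^k\mid B_n(t)$), and $\nu(n)=\max\{k:\;2^k\mid n\}$. *)

theory Defs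
  imports "HOL-Computational_Algebra.Polynomial" "HOL-Computational_Algebra.Primes"
begin

text \<open>Stern polynomials: B 0 = 0, B 1 = 1, B (2n) = t B n, B (2n+1) = B n + B (n+1).\<close>
function stern_poly :: "nat \<Rightarrow> int poly" where
  "stern_poly 0 = 0"
| "stern_poly (Suc 0) = 1"
| "stern_poly (Suc (Suc m)) =
     (if even m then [:0, 1:] * stern_poly (Suc (m div 2))
      else stern_poly (Suc (m div 2)) + stern_poly (Suc (Suc (m div 2))))"
  by pat_completeness auto
termination
  by (relation "measure id") (auto elim: oddE)

definition stern_e :: "nat \<Rightarrow> nat" where "stern_e n = degree (stern_poly n)"
definition stern_d :: "nat \<Rightarrow> nat" where "stern_d n = order 0 (stern_poly n)"
definition nu :: "nat \<Rightarrow> nat" where "nu n = multiplicity (2::nat) n"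

lemma stern_poly_even: "n \<ge> 1 \<Longrightarrow> stern_poly (2*n) = [:0,1:] * stern_poly n"
proof -
  assume "n \<ge> 1" then obtain k where k: "n = Suc k" by (cases n) auto
  have "2*n = Suc (Suc (2*k))" using k by simp
  then show ?thesis using k by simp
qed

lemma stern_poly_odd: "n \<ge> 1 \<Longrightarrow> stern_poly (2*n+1) = stern_poly n + stern_poly (n+1)"
proof -
  assume "n \<ge> 1" then obtain k where k: "n = Suc k" by (cases n) auto
  have "2*n+1 = Suc (Suc (2*k+1))" using k by simp
  then show ?thesis using k by simp
qed

end

theory Submission
  imports Defs
begin

lemma aux2: "(2::nat)^(k+1) - 1 \<ge> 1"
proof -
  have "(2::nat)^k \<ge> 1" by simp
  moreover have "(2::nat)^(k+1) = 2*2^k" by simp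
  ultimately show ?thesis by linarith
qed

lemma multp: "multiplicity (2::nat) (2^p * m) = p + multiplicity 2 m" if "m > 0"
proof (induction p)
  case 0 then show ?case by simp
next
  case (Suc p)
  have e: "(2::nat)^Suc p * m = 2 * (2^p*m)" by simp
  have "multiplicity (2::nat) (2 * (2^p*m)) = Suc (multiplicity 2 (2^p*m))"
    by (rule multiplicity_times_same) (use that in auto)
  then show ?case unfolding e using Suc.IH by simp
qed

lemma pos1: "n \<ge> 1 \<Longrightarrow> poly (stern_poly n) 1 > 0"
proof (induction n rule: less_induct)
  case (less n)
  show ?case
  proof (cases "n = 1")
    case True then show ?thesis by simp
  next
    case False
    show ?thesis
    proof (cases "even n")
      case True
      then obtain m where m: "n = 2*m" by blast
      with less False have "m \<ge> 1" "m < n" by auto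
      then show ?thesis using less m by (simp add: stern_poly_even)
    next
      case odd: False
      then obtain m where m: "n = 2*m+1" using oddE by blast
      with less False have "m \<ge> 1" "m < n" "m+1 < n" by auto
      then show ?thesis using less.IH[of m] less.IH[of "m+1"] m stern_poly_odd[of m] by simp
    qed
  qed
qed

lemma nz: "n \<ge> 1 \<Longrightarrow> stern_poly n \<noteq> 0"
  using pos1 by fastforce

lemma pow2: "stern_poly (2^p * m) = [:0,1:]^p * stern_poly m" if "m \<ge> 1"
proof (induction p)
  case 0 then show ?case by simp
next
  case (Suc p)
  have "2^Suc p * m = 2 * (2^p*m)" by simp
  moreover have "2^p*m \<ge> 1" using that by simp
  ultimately show ?case using Suc stern_poly_even[of "2^p*m"] by (simp add: mult.assoc)
qed

lemma ones: "coeff (stern_poly (2^(k+1) - 1)) 0 = 1 \<and> degree (stern_poly (2^(k+1) - 1)) = k"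
proof (induction k)
  case 0 then show ?case by simp
next
  case (Suc k)
  let ?m = "2^(k+1) - 1 :: nat"
  have m1: "?m \<ge> 1" by (rule aux2)
  have e: "(2::nat)^(Suc k+1) - 1 = 2*?m + 1"
  proof -
    have "(2::nat)^(k+1) \<ge> 1" by simp
    moreover have "(2::nat)^(Suc k+1) = 2*2^(k+1)" by simp
    ultimately show ?thesis by linarith
  qed
  have e2: "?m + 1 = 2^(k+1) * 1" by simp
  have B: "stern_poly (2^(Suc k+1) - 1) = stern_poly ?m + [:0,1:]^(k+1)"
    unfolding e using stern_poly_odd[OF m1] pow2[of 1 "k+1"] e2 by simp
  have d: "degree ([:0,1::int:]^(k+1)) = k+1" by (simp add: degree_power_eq)
  show ?case unfolding B using Suc d
    by (simp add: degree_add_eq_right coeff_0_power)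
qed

lemma main_n: assumes "p \<le> q"
  defines "n \<equiv> 2^p * (2^(q-p+1) - 1 :: nat)"
  shows "n \<ge> 1 \<and> nu n = p \<and> stern_e n = q \<and> stern_d n = p"
proof -
  let ?m = "2^(q-p+1) - 1 :: nat"
  have m1: "?m \<ge> 1" by (rule aux2)
  have modd: "odd ?m" by simp
  have B: "stern_poly n = [:0,1:]^p * stern_poly ?m" unfolding n_def using pow2[OF m1] .
  have nzm: "stern_poly ?m \<noteq> 0" using nz[OF m1] .
  have o: "coeff (stern_poly ?m) 0 = 1 \<and> degree (stern_poly ?m) = q - p"
    using ones[of "q-p"] by simp
  have pnz: "[:0,1::int:]^p \<noteq> 0" by simp
  have prodnz: "[:0,1::int:]^p * stern_poly ?m \<noteq> 0" using pnz nzm by simp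
  have n1: "n \<ge> 1" unfolding n_def using m1 by simp
  have "nu n = p"
  proof -
    have "multiplicity (2::nat) ?m = 0"
      by (rule not_dvd_imp_multiplicity_0) (use modd in simp)
    moreover have "multiplicity (2::nat) (2^p * ?m) = p + multiplicity 2 ?m"
      by (rule multp) (use m1 in simp)
    ultimately show ?thesis unfolding nu_def n_def by simp
  qed
  moreover have "stern_e n = q"
    unfolding stern_e_def B using o pnz nzm assms by (simp add: degree_mult_eq degree_power_eq)
  moreover have "stern_d n = p"
  proof -
    have "order 0 (stern_poly ?m) = 0"
      by (rule order_0I) (use o in \<open>simp add: poly_0_coeff_0\<close>)
    moreover have "order 0 ([:0,1::int:]^p) = p" using order_power_n_n[of "0::int" p] by simp
    ultimately show ?thesis unfolding stern_d_def B order_mult[OF prodnz] by simp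
  qed
  ultimately show ?thesis using n1 by simp
qed

theorem mainTheorem2:
  shows "(\<forall>p q :: nat. p \<le> q \<longrightarrow> (\<exists>n::nat. n \<ge> 1 \<and> nu n = p \<and> stern_e n = q))
       \<and> (\<forall>n::nat. n \<ge> 1 \<longrightarrow> stern_d n \<le> stern_e n)
       \<and> (\<forall>p q :: nat. p \<le> q \<longrightarrow> (\<exists>n::nat. n \<ge> 1 \<and> stern_d n = p \<and> stern_e n = q))"
proof (intro conjI allI impI)
  fix p q :: nat assume "p \<le> q"
  from main_n[OF this] show "\<exists>n::nat. n \<ge> 1 \<and> nu n = p \<and> stern_e n = q" by blast
next
  fix p q :: nat assume "p \<le> q"
  from main_n[OF this] show "\<exists>n::nat. n \<ge> 1 \<and> stern_d n = p \<and> stern_e n = q" by blast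
next
  fix n :: nat assume "n \<ge> 1"
  then show "stern_d n \<le> stern_e n" unfolding stern_d_def stern_e_def
    using nz order_degree by blast
qed

end
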